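(* Let $v\in\mathrm{Box}(\Sigma_+)$, $t\in\mathcal I(y^v)$, and let $l\in\mathbb L$ be such that $p(l)\in p(\mathcal S^{es}_+(\gamma^v))=p(\mathcal S^{es}_-(\gamma^v(t)))$, where $p:\mathbb L\to\mathbb L/\langle h\rangle$ is the projection. Then for $m\in\mathbb Z$: $mh+l\in\mathcal S^{es}_+(\gamma^v)$ if and only if $m\ge m_+(l)$, and $mh+l\in\mathcal S^{es}_-(\gamma^v(t))$ if and only if $m\le m_{-,t}(l)$.
   Context: $N\cong\mathbb Z^d$ lattice, $\mathcal A=\{v_1,\dots,v_n\}\subset N$ generating $N$ with a homomorphism $\mathrm h:N\to\mathbb Z$, $\mathrm h(v_j)=1$; $\mathbb L=\{l\in\mathbb Z^n:\sum l_jv_j=0\}$; fix $\beta\in N$. $\Sigma_\pm$ are the fans supported on $\mathbb R_{\ge0}\mathrm{Conv}(\mathcal A)$ of two regular triangulations with vertices in $\mathcal A$ joined by an edge of the secondary polytope; there is a circuit $I$ with primitive relation $h\in\mathbb L$, $I_\pm=\{v_j:\pm h_j>0\}$, such that (with $\mathcal F\subset\mathcal A\setminus I$ separating if $\mathcal F\cup(I\setminus\{v\})$ generates a maximal cone of $\Sigma_\pm$ for all $v\in I_\pm$) $\Sigma_-$ arises from $\Sigma_+$ by replacing the maximal cones $\mathcal F\cup(I\setminus\{v\})$, $v\in I_+$, by $\mathcal F\cup(I\setminus\{v\})$, $v\in I_-$; these are the essential maximal cones of $\Sigma_\pm$. $\mathrm{Box}(\Sigma_+)$: $v=\sum q^v_jv_j\in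 N$, $0\le q^v_j<1$, $q^v_j=0$ unless $v_j$ spans a ray of a fixed maximal cone of $\Sigma_+$; $y^v_j=e^{2\pi iq^v_j}$. $\mathcal I(r)=\{t\in\mathbb C^*:r_jt^{h_j}=1$ for some $v_j\in I_-\}$. Choose $\gamma^v\in\mathbb Q^n$ with $e^{2\pi i\gamma^v_j}=y^v_j$, $\sum\gamma^v_jv_j=\beta$; for $t\in\mathcal I(y^v)$ fix $\theta_t\in\mathbb Q$ with $e^{2\pi i\theta_t}=t$ ($\theta_1=0$) and set $\gamma^v(t)=\gamma^v+\theta_th$. For $\gamma\in\mathbb Q^n$, $l\in\mathbb L$: $\mathrm{Supp}(l)=\{v_j:l_j+\gamma_j\notin\mathbb Z_{\ge0}\}$; $\mathcal S^{es}_\pm(\gamma)$ is the set of $l\in\mathbb L$ such that all elements of $\mathrm{Supp}(l)$ generate rays of one essential maximal cone of $\Sigma_\pm$. Define $m_+(l)=\min\{m\in\mathbb Z:mh_j+l_j+\gamma^v_j\in\mathbb Z_{\ge0}$ for some $j$ with $v_j\in I_+\}$ and $m_{-,t}(l)=\max\{m\in\mathbb Z:mh_j+l_j+\gamma^v_j(t)\in\mathbb Z_{\ge0}$ for some $j$ with $v_j\in I_-\}$ (these are well defined integers). *)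

theory Defs
  imports "HOL-Analysis.Analysis"
begin

text \<open>The point configuration A = {v_0,...,v_(n-1)} in N = Z^d is given by
  v :: nat => int^'d (indices j < n).  Elements of Z^n are functions nat => int
  vanishing outside {..<n}.\<close>

definition vr :: "(nat \<Rightarrow> int^'d) \<Rightarrow> nat \<Rightarrow> real^'d" where
  "vr v j = (\<chi> k. real_of_int (v j $ k))"

definition lattice_L :: "nat \<Rightarrow> (nat \<Rightarrow> int^'d) \<Rightarrow> (nat \<Rightarrow> int) set" where
  "lattice_L n v = {l. (\<forall>j\<ge>n. l j = 0) \<and> (\<forall>k. (\<Sum>j<n. l j * v j $ k) = 0)}"

text \<open>Regular triangulation with vertices in A, given by its maximal simplices
  (index sets); the maximal cones of the associated fan are the cones over them.
  A height function omega lifts the points; maximal lower faces of the lifted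
  configuration are the sets of points where a linear functional psi (an affine
  function on the hyperplane h = 1) touches the lift from below, and span
  dimension d; the triangulation condition is that all of them are simplices.\<close>
definition regular_triangulation :: "nat \<Rightarrow> (nat \<Rightarrow> int^'d) \<Rightarrow> nat set set \<Rightarrow> bool" where
  "regular_triangulation n v T \<longleftrightarrow>
     (\<exists>\<omega>::nat \<Rightarrow> real.
        T = {\<sigma>. \<exists>\<psi>::real^'d. (\<forall>j<n. \<psi> \<bullet> vr v j \<le> \<omega> j)
                  \<and> \<sigma> = {j. j < n \<and> \<psi> \<bullet> vr v j = \<omega> j}
                  \<and> dim (vr v ` \<sigma>) = CARD('d)})
     \<and> (\<forall>\<sigma>\<in>T. independent (vr v ` \<sigma>) \<and> inj_on (vr v) \<sigma>)"

text \<open>Circuit: minimal (affinely = linearly, since h(v_j)=1) dependent subset.\<close>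
definition circuit :: "nat \<Rightarrow> (nat \<Rightarrow> int^'d) \<Rightarrow> nat set \<Rightarrow> bool" where
  "circuit n v I \<longleftrightarrow> I \<subseteq> {..<n} \<and> dependent (vr v ` I) \<and>
     (\<forall>J. J \<subset> I \<longrightarrow> independent (vr v ` J))"

definition primitive_relation :: "nat \<Rightarrow> (nat \<Rightarrow> int^'d) \<Rightarrow> nat set \<Rightarrow> (nat \<Rightarrow> int) \<Rightarrow> bool" where
  "primitive_relation n v I h \<longleftrightarrow> h \<in> lattice_L n v \<and> {j. h j \<noteq> 0} = I \<and> Gcd (h ` I) = 1"

definition Iplus :: "(nat \<Rightarrow> int) \<Rightarrow> nat set" where
  "Iplus h = {j. h j > 0}"

definition Iminus :: "(nat \<Rightarrow> int) \<Rightarrow> nat set" where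
  "Iminus h = {j. h j < 0}"

definition separating :: "nat \<Rightarrow> nat set \<Rightarrow> (nat \<Rightarrow> int) \<Rightarrow> nat set set \<Rightarrow> nat set \<Rightarrow> bool" where
  "separating n I h Tp F \<longleftrightarrow> F \<subseteq> {..<n} - I \<and> (\<forall>i\<in>Iplus h. F \<union> (I - {i}) \<in> Tp)"

definition ess_cones_plus :: "nat \<Rightarrow> nat set \<Rightarrow> (nat \<Rightarrow> int) \<Rightarrow> nat set set \<Rightarrow> nat set set" where
  "ess_cones_plus n I h Tp = {F \<union> (I - {i}) | F i. separating n I h Tp F \<and> i \<in> Iplus h}"

definition ess_cones_minus :: "nat \<Rightarrow> nat set \<Rightarrow> (nat \<Rightarrow> int) \<Rightarrow> nat set set \<Rightarrow> nat set set" where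
  "ess_cones_minus n I h Tp = {F \<union> (I - {i}) | F i. separating n I h Tp F \<and> i \<in> Iminus h}"

definition Supp :: "nat \<Rightarrow> (nat \<Rightarrow> rat) \<Rightarrow> (nat \<Rightarrow> int) \<Rightarrow> nat set" where
  "Supp n \<gamma> l = {j. j < n \<and> of_int (l j) + \<gamma> j \<notin> \<nat>}"

definition S_es :: "nat \<Rightarrow> (nat \<Rightarrow> int^'d) \<Rightarrow> nat set set \<Rightarrow> (nat \<Rightarrow> rat) \<Rightarrow> (nat \<Rightarrow> int) set" where
  "S_es n v C \<gamma> = {l \<in> lattice_L n v. \<exists>c\<in>C. Supp n \<gamma> l \<subseteq> c}"

definition m_plus :: "(nat \<Rightarrow> int) \<Rightarrow> (nat \<Rightarrow> rat) \<Rightarrow> (nat \<Rightarrow> int) \<Rightarrow> int" where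
  "m_plus h \<gamma> l = (LEAST m::int. \<exists>j\<in>Iplus h. of_int (m * h j + l j) + \<gamma> j \<in> \<nat>)"

definition m_minus :: "(nat \<Rightarrow> int) \<Rightarrow> (nat \<Rightarrow> rat) \<Rightarrow> (nat \<Rightarrow> int) \<Rightarrow> int" where
  "m_minus h \<gamma> l = (GREATEST m::int. \<exists>j\<in>Iminus h. of_int (m * h j + l j) + \<gamma> j \<in> \<nat>)"

definition in_Box :: "nat \<Rightarrow> (nat \<Rightarrow> int^'d) \<Rightarrow> nat set set \<Rightarrow> int^'d \<Rightarrow> (nat \<Rightarrow> real) \<Rightarrow> bool" where
  "in_Box n v Tp vb q \<longleftrightarrow>
     (\<forall>k. real_of_int (vb $ k) = (\<Sum>j<n. q j * real_of_int (v j $ k)))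
     \<and> (\<forall>j. 0 \<le> q j \<and> q j < 1)
     \<and> (\<exists>\<sigma>\<in>Tp. \<forall>j. q j \<noteq> 0 \<longrightarrow> j \<in> \<sigma>)"

definition yv :: "(nat \<Rightarrow> real) \<Rightarrow> nat \<Rightarrow> complex" where
  "yv q j = exp (2 * of_real pi * \<i> * of_real (q j))"

definition Iset :: "(nat \<Rightarrow> int) \<Rightarrow> (nat \<Rightarrow> complex) \<Rightarrow> complex set" where
  "Iset h r = {t. t \<noteq> 0 \<and> (\<exists>j\<in>Iminus h. r j * t powi h j = 1)}"

end

theory Submission
  imports Defs
begin

lemma nats_add_int: fixes x :: rat assumes "x \<in> \<nat>" "z \<ge> 0" shows "x + of_int z \<in> \<nat>"
proof -
  obtain k where "x = of_nat k" using assms(1) Nats_cases by blast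
  hence "x + of_int z = of_nat (k + nat z)" using assms(2) by simp
  thus ?thesis by (metis of_nat_in_Nats)
qed

lemma nats_ge0: fixes x :: rat assumes "x \<in> \<nat>" shows "x \<ge> 0"
  using assms Nats_cases by force
lemma val_bound: fixes g :: rat and m a c :: int
  assumes "of_int (m * c + a) + g \<in> \<nat>"
  shows "m * c \<ge> - (\<lceil>\<bar>g\<bar>\<rceil> + \<bar>a\<bar>)"
proof -
  have "of_int (m * c + a) + g \<ge> 0" using nats_ge0[OF assms] .
  moreover have "g \<le> of_int \<lceil>\<bar>g\<bar>\<rceil>" by (meson abs_ge_self le_of_int_ceiling order_trans)
  ultimately have "of_int (m * c + a) + of_int \<lceil>\<bar>g\<bar>\<rceil> \<ge> (0::rat)" by linarith
  hence "of_int (m * c + a + \<lceil>\<bar>g\<bar>\<rceil>) \<ge> (0::rat)" by (simp only: of_int_add)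
  hence "m * c + a + \<lceil>\<bar>g\<bar>\<rceil> \<ge> 0" by (simp only: of_int_0_le_iff)
  thus ?thesis by linarith
qed

lemma lat_comb: assumes "h \<in> lattice_L n v" "l \<in> lattice_L n v"
  shows "(\<lambda>j. m * h j + l j) \<in> lattice_L n v"
proof -
  have "(\<Sum>j<n. (m * h j + l j) * v j $ k) = m * (\<Sum>j<n. h j * v j $ k) + (\<Sum>j<n. l j * v j $ k)" for k
    by (simp add: distrib_right sum.distrib sum_distrib_left mult.assoc)
  thus ?thesis using assms unfolding lattice_L_def by simp
qed

lemma least_char: fixes S :: "int set" and B :: int
  assumes "x \<in> S" "\<forall>m\<in>S. B \<le> m" "\<forall>m\<in>S. \<forall>k\<ge>m. k\<in>S"
  shows "\<forall>m. (m\<in>S) = (m \<ge> (LEAST m. m \<in> S))"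
proof -
  define K where "K = {k::nat. B + int k \<in> S}"
  have "nat (x - B) \<in> K" using assms unfolding K_def by auto
  define k0 where "k0 = (LEAST k. k \<in> K)"
  have k0K: "k0 \<in> K" unfolding k0_def by (rule LeastI) fact
  have k0le: "\<And>k. k \<in> K \<Longrightarrow> k0 \<le> k" unfolding k0_def by (rule Least_le)
  define m0 where "m0 = B + int k0"
  have m0S: "m0 \<in> S" using k0K unfolding K_def m0_def by auto
  have m0le: "\<And>m. m \<in> S \<Longrightarrow> m0 \<le> m"
  proof -
    fix m assume mS: "m \<in> S"
    hence "B \<le> m" using assms(2) by auto
    hence "nat (m - B) \<in> K" using mS unfolding K_def by auto
    hence "k0 \<le> nat (m - B)" by (rule k0le)
    thus "m0 \<le> m" unfolding m0_def using \<open>B \<le> m\<close> by linarith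
  qed
  have eq: "(LEAST m. m \<in> S) = m0" using m0S m0le by (intro Least_equality[where P="\<lambda>m. m \<in> S"])
  show ?thesis unfolding eq
  proof (intro allI iffI)
    fix m assume "m \<in> S" thus "m0 \<le> m" by (rule m0le)
  next
    fix m assume "m0 \<le> m" thus "m \<in> S" using assms(3) m0S by blast
  qed
qed

lemma greatest_char: fixes S :: "int set" and B :: int
  assumes "x \<in> S" "\<forall>m\<in>S. m \<le> B" "\<forall>m\<in>S. \<forall>k\<le>m. k\<in>S"
  shows "\<forall>m. (m\<in>S) = (m \<le> (GREATEST m. m \<in> S))"
proof -
  define K where "K = {k::nat. B - int k \<in> S}"
  have "nat (B - x) \<in> K" using assms unfolding K_def by auto
  define k0 where "k0 = (LEAST k. k \<in> K)"
  have k0K: "k0 \<in> K" unfolding k0_def by (rule LeastI) fact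
  have k0le: "\<And>k. k \<in> K \<Longrightarrow> k0 \<le> k" unfolding k0_def by (rule Least_le)
  define m0 where "m0 = B - int k0"
  have m0S: "m0 \<in> S" using k0K unfolding K_def m0_def by auto
  have m0le: "\<And>m. m \<in> S \<Longrightarrow> m \<le> m0"
  proof -
    fix m assume mS: "m \<in> S"
    hence "m \<le> B" using assms(2) by auto
    hence "nat (B - m) \<in> K" using mS unfolding K_def by auto
    hence "k0 \<le> nat (B - m)" by (rule k0le)
    thus "m \<le> m0" unfolding m0_def using \<open>m \<le> B\<close> by linarith
  qed
  have eq: "(GREATEST m. m \<in> S) = m0" using m0S m0le by (intro Greatest_equality[where P="\<lambda>m. m \<in> S"])
  show ?thesis unfolding eq
  proof (intro allI iffI)
    fix m assume "m \<in> S" thus "m \<le> m0" by (rule m0le)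
  next
    fix m assume "m \<le> m0" thus "m \<in> S" using assms(3) m0S by blast
  qed
qed

lemma S_es_char:
  assumes hL: "h \<in> lattice_L n v" and lL: "l \<in> lattice_L n v" and hI: "{j. h j \<noteq> 0} = I"
    and In: "I \<subseteq> {..<n}" and KI: "K \<subseteq> I"
  shows "(\<lambda>j. m * h j + l j) \<in> S_es n v {F \<union> (I - {i}) | F i. separating n I h Tp F \<and> i \<in> K} g
     \<longleftrightarrow> (\<exists>F. separating n I h Tp F \<and> Supp n g l - I \<subseteq> F) \<and> (\<exists>i\<in>K. of_int (m*h i + l i) + g i \<in> \<nat>)"
proof -
  have SI: "Supp n g (\<lambda>j. m * h j + l j) - I = Supp n g l - I"
    using hI unfolding Supp_def by auto
  have iS: "\<And>i. i \<in> K \<Longrightarrow> (i \<notin> Supp n g (\<lambda>j. m * h j + l j)) = (of_int (m*h i + l i) + g i \<in> \<nat>)"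
    using KI In unfolding Supp_def by auto
  have "(\<exists>c\<in>{F \<union> (I - {i}) | F i. separating n I h Tp F \<and> i \<in> K}. Supp n g (\<lambda>j. m * h j + l j) \<subseteq> c)
     \<longleftrightarrow> (\<exists>F. separating n I h Tp F \<and> Supp n g l - I \<subseteq> F) \<and> (\<exists>i\<in>K. of_int (m*h i + l i) + g i \<in> \<nat>)"
  proof
    assume "\<exists>c\<in>{F \<union> (I - {i}) | F i. separating n I h Tp F \<and> i \<in> K}. Supp n g (\<lambda>j. m * h j + l j) \<subseteq> c"
    then obtain F i where F: "separating n I h Tp F" "i \<in> K" "Supp n g (\<lambda>j. m * h j + l j) \<subseteq> F \<union> (I - {i})"
      by blast
    have "F \<inter> I = {}" using F(1) unfolding separating_def by auto
    hence "i \<notin> Supp n g (\<lambda>j. m * h j + l j)" using F(3) F(2) KI by auto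
    moreover have "Supp n g l - I \<subseteq> F" using F(3) SI by auto
    ultimately show "(\<exists>F. separating n I h Tp F \<and> Supp n g l - I \<subseteq> F) \<and> (\<exists>i\<in>K. of_int (m*h i + l i) + g i \<in> \<nat>)"
      using F(1,2) iS[OF F(2)] by blast
  next
    assume A: "(\<exists>F. separating n I h Tp F \<and> Supp n g l - I \<subseteq> F) \<and> (\<exists>i\<in>K. of_int (m*h i + l i) + g i \<in> \<nat>)"
    then obtain F i where F: "separating n I h Tp F" "Supp n g l - I \<subseteq> F" "i \<in> K"
      "of_int (m*h i + l i) + g i \<in> \<nat>" by blast
    have "i \<notin> Supp n g (\<lambda>j. m * h j + l j)" using iS[OF F(3)] F(4) by simp
    hence sub: "Supp n g (\<lambda>j. m * h j + l j) \<subseteq> F \<union> (I - {i})" using F(2) SI by blast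
    have mem: "F \<union> (I - {i}) \<in> {F \<union> (I - {i}) | F i. separating n I h Tp F \<and> i \<in> K}"
      using F(1,3) by blast
    show "\<exists>c\<in>{F \<union> (I - {i}) | F i. separating n I h Tp F \<and> i \<in> K}. Supp n g (\<lambda>j. m * h j + l j) \<subseteq> c"
      using mem sub by (rule bexI[rotated])
  qed
  moreover have "(\<lambda>j. m * h j + l j) \<in> lattice_L n v" using lat_comb[OF hL lL] .
  ultimately show ?thesis unfolding S_es_def by (simp only: mem_Collect_eq simp_thms)
qed

lemma lb_pos: fixes m x c :: int assumes "m * x \<ge> - c" "x \<ge> 1" "c \<ge> 0" shows "m \<ge> - c"
proof (cases "m \<ge> 0")
  case True thus ?thesis using assms(3) by linarith
next
  case False
  hence "m * x \<le> m * 1" using mult_left_mono_neg[of 1 x m] assms(2) by simp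
  thus ?thesis using assms(1) by simp
qed

lemma ub_neg: fixes m x c :: int assumes "m * x \<ge> - c" "x \<le> -1" "c \<ge> 0" shows "m \<le> c"
proof -
  have "(-m) * (-x) \<ge> - c" using assms(1) by simp
  from lb_pos[OF this _ assms(3)] assms(2) show ?thesis by simp
qed

theorem proposition4p7:
  fixes n :: nat and v :: "nat \<Rightarrow> int^'d" and Tp Tm :: "nat set set"
    and I :: "nat set" and h :: "nat \<Rightarrow> int" and \<beta> vb :: "int^'d"
    and q :: "nat \<Rightarrow> real" and \<gamma> :: "nat \<Rightarrow> rat" and t :: complex and \<theta> :: rat
    and l :: "nat \<Rightarrow> int"
  assumes inj: "inj_on v {..<n}"
    and gen: "\<forall>x::int^'d. \<exists>c::nat \<Rightarrow> int. \<forall>k. x $ k = (\<Sum>j<n. c j * v j $ k)"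
    and height: "\<exists>w::int^'d. \<forall>j<n. (\<Sum>k\<in>UNIV. w $ k * v j $ k) = 1"
    and regp: "regular_triangulation n v Tp"
    and regm: "regular_triangulation n v Tm"
    and neq: "Tp \<noteq> Tm"
    and circ: "circuit n v I"
    and prim: "primitive_relation n v I h"
    and flip: "Tm = (Tp - ess_cones_plus n I h Tp) \<union> ess_cones_minus n I h Tp"
    and box: "in_Box n v Tp vb q"
    and gam1: "\<forall>j<n. exp (2 * of_real pi * \<i> * of_real (of_rat (\<gamma> j))) = yv q j"
    and gam2: "\<forall>k. of_int (\<beta> $ k) = (\<Sum>j<n. \<gamma> j * of_int (v j $ k))"
    and tI: "t \<in> Iset h (yv q)"
    and th1: "exp (2 * of_real pi * \<i> * of_real (of_rat \<theta>)) = t"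
    and th2: "t = 1 \<longrightarrow> \<theta> = 0"
    and lL: "l \<in> lattice_L n v"
    and pl_plus: "\<exists>m::int. (\<lambda>j. m * h j + l j) \<in> S_es n v (ess_cones_plus n I h Tp) \<gamma>"
    and pl_minus: "\<exists>m::int. (\<lambda>j. m * h j + l j)
                     \<in> S_es n v (ess_cones_minus n I h Tp) (\<lambda>j. \<gamma> j + \<theta> * of_int (h j))"
  shows "\<forall>m::int.
     ((\<lambda>j. m * h j + l j) \<in> S_es n v (ess_cones_plus n I h Tp) \<gamma> \<longleftrightarrow> m \<ge> m_plus h \<gamma> l)
   \<and> ((\<lambda>j. m * h j + l j) \<in> S_es n v (ess_cones_minus n I h Tp) (\<lambda>j. \<gamma> j + \<theta> * of_int (h j))
        \<longleftrightarrow> m \<le> m_minus h (\<lambda>j. \<gamma> j + \<theta> * of_int (h j)) l)"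
proof -
  have hL: "h \<in> lattice_L n v" and hI: "{j. h j \<noteq> 0} = I"
    using prim unfolding primitive_relation_def by auto
  have In: "I \<subseteq> {..<n}" using circ unfolding circuit_def by auto
  have finI: "finite I" using In finite_subset by blast
  have KpI: "Iplus h \<subseteq> I" using hI unfolding Iplus_def by auto
  have KmI: "Iminus h \<subseteq> I" using hI unfolding Iminus_def by auto
  define g where "g = (\<lambda>j. \<gamma> j + \<theta> * of_int (h j))"
  define c where "c = (\<lambda>(g::nat \<Rightarrow> rat) i. \<lceil>\<bar>g i\<bar>\<rceil> + \<bar>l i\<bar>)"
  have c0: "\<And>g i. c g i \<ge> 0" unfolding c_def by auto
  define P where "P = {m. \<exists>j\<in>Iplus h. of_int (m * h j + l j) + \<gamma> j \<in> \<nat>}"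
  define M where "M = {m. \<exists>j\<in>Iminus h. of_int (m * h j + l j) + g j \<in> \<nat>}"
  have charP: "\<And>m. (\<lambda>j. m * h j + l j) \<in> S_es n v (ess_cones_plus n I h Tp) \<gamma>
     \<longleftrightarrow> (\<exists>F. separating n I h Tp F \<and> Supp n \<gamma> l - I \<subseteq> F) \<and> m \<in> P"
    unfolding ess_cones_plus_def P_def using S_es_char[OF hL lL hI In KpI] by simp
  have charM: "\<And>m. (\<lambda>j. m * h j + l j) \<in> S_es n v (ess_cones_minus n I h Tp) g
     \<longleftrightarrow> (\<exists>F. separating n I h Tp F \<and> Supp n g l - I \<subseteq> F) \<and> m \<in> M"
    unfolding ess_cones_minus_def M_def using S_es_char[OF hL lL hI In KmI] by simp
  obtain m1 where m1: "(\<lambda>j. m1 * h j + l j) \<in> S_es n v (ess_cones_plus n I h Tp) \<gamma>"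
    using pl_plus by blast
  obtain m2 where m2: "(\<lambda>j. m2 * h j + l j) \<in> S_es n v (ess_cones_minus n I h Tp) g"
    using pl_minus unfolding g_def by blast
  have QP: "\<exists>F. separating n I h Tp F \<and> Supp n \<gamma> l - I \<subseteq> F" and m1P: "m1 \<in> P"
    using charP m1 by auto
  have QM: "\<exists>F. separating n I h Tp F \<and> Supp n g l - I \<subseteq> F" and m2M: "m2 \<in> M"
    using charM m2 by auto
  have Pbd: "\<forall>m\<in>P. - (\<Sum>i\<in>Iplus h. c \<gamma> i) \<le> m"
  proof
    fix m assume "m \<in> P"
    then obtain i where i: "i \<in> Iplus h" "of_int (m * h i + l i) + \<gamma> i \<in> \<nat>" unfolding P_def by auto
    have "m * h i \<ge> - c \<gamma> i" using val_bound[OF i(2)] unfolding c_def by simp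
    moreover have "h i \<ge> 1" using i(1) unfolding Iplus_def by auto
    ultimately have "m \<ge> - c \<gamma> i" using c0[of \<gamma> i] lb_pos by blast
    moreover have "c \<gamma> i \<le> (\<Sum>i\<in>Iplus h. c \<gamma> i)"
      by (rule member_le_sum) (use i(1) c0 finite_subset[OF KpI finI] in auto)
    ultimately show "- (\<Sum>i\<in>Iplus h. c \<gamma> i) \<le> m" by linarith
  qed
  have Mbd: "\<forall>m\<in>M. m \<le> (\<Sum>i\<in>Iminus h. c g i)"
  proof
    fix m assume "m \<in> M"
    then obtain i where i: "i \<in> Iminus h" "of_int (m * h i + l i) + g i \<in> \<nat>" unfolding M_def by auto
    have "m * h i \<ge> - c g i" using val_bound[OF i(2)] unfolding c_def by simp
    moreover have "h i \<le> -1" using i(1) unfolding Iminus_def by auto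
    ultimately have "m \<le> c g i" using c0[of g i] ub_neg by blast
    moreover have "c g i \<le> (\<Sum>i\<in>Iminus h. c g i)"
      by (rule member_le_sum) (use i(1) c0 finite_subset[OF KmI finI] in auto)
    ultimately show "m \<le> (\<Sum>i\<in>Iminus h. c g i)" by linarith
  qed
  have Pup: "\<forall>m\<in>P. \<forall>k\<ge>m. k \<in> P"
  proof (intro ballI allI impI)
    fix m k assume "m \<in> P" "m \<le> k"
    then obtain i where i: "i \<in> Iplus h" "of_int (m * h i + l i) + \<gamma> i \<in> \<nat>" unfolding P_def by auto
    have "(k - m) * h i \<ge> 0" using i(1) \<open>m \<le> k\<close> unfolding Iplus_def by auto
    from nats_add_int[OF i(2) this]
    have "of_int (k * h i + l i) + \<gamma> i \<in> \<nat>" by (simp add: algebra_simps)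
    thus "k \<in> P" using i(1) unfolding P_def by auto
  qed
  have Mdown: "\<forall>m\<in>M. \<forall>k\<le>m. k \<in> M"
  proof (intro ballI allI impI)
    fix m k assume "m \<in> M" "k \<le> m"
    then obtain i where i: "i \<in> Iminus h" "of_int (m * h i + l i) + g i \<in> \<nat>" unfolding M_def by auto
    have "(k - m) * h i \<ge> 0" using i(1) \<open>k \<le> m\<close> unfolding Iminus_def
      by (simp add: mult_nonpos_nonpos)
    from nats_add_int[OF i(2) this]
    have "of_int (k * h i + l i) + g i \<in> \<nat>" by (simp add: algebra_simps)
    thus "k \<in> M" using i(1) unfolding M_def by auto
  qed
  have LP: "\<forall>m. (m \<in> P) = (m \<ge> (LEAST m. m \<in> P))" by (rule least_char[OF m1P Pbd Pup])
  have GM: "\<forall>m. (m \<in> M) = (m \<le> (GREATEST m. m \<in> M))" by (rule greatest_char[OF m2M Mbd Mdown])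
  have e1: "m_plus h \<gamma> l = (LEAST m. m \<in> P)" unfolding m_plus_def P_def by simp
  have e2: "m_minus h g l = (GREATEST m. m \<in> M)" unfolding m_minus_def M_def by simp
  show ?thesis unfolding g_def[symmetric]
  proof (intro allI conjI)
    fix m
    show "(\<lambda>j. m * h j + l j) \<in> S_es n v (ess_cones_plus n I h Tp) \<gamma> \<longleftrightarrow> m \<ge> m_plus h \<gamma> l"
    proof -
      have "m \<in> P \<longleftrightarrow> m \<ge> m_plus h \<gamma> l" unfolding e1 using LP by blast
      thus ?thesis using charP[of m] QP by blast
    qed
    show "(\<lambda>j. m * h j + l j) \<in> S_es n v (ess_cones_minus n I h Tp) g \<longleftrightarrow> m \<le> m_minus h g l"
    proof -
      have "m \<in> M \<longleftrightarrow> m \<le> m_minus h g l" unfolding e2 using GM by blast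
      thus ?thesis using charM[of m] QM by blast
    qed
  qed
qed

end
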